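(* Let $X,Y$ be real Banach spaces with a bilinear map $\langle\cdot,\cdot\rangle\colon X\times Y\to\mathbb{R}$ and normalized sequences $(e_j)\subset X$, $(f_j)\subset Y$ satisfying (B1)–(B5) below, and assume $(e_j)$ is $(C_u,C_s)$-subsymmetric. Let $T\colon X\to X$ be a bounded linear operator with $\delta:=\inf_j\langle Te_j,f_j\rangle>0$. For $L\in2\mathbb{N}$ and $0<\kappa<1$ define $$N=\max\Bigl(L,\ 1+\Bigl\lceil\frac{2C_d^2C_uC_s^3\|T\|^2}{\kappa^2\delta^2}\Bigr\rceil\Bigr).$$ Then for each $\mathcal{A}\subset\mathbb{N}$ with $|\mathcal{A}|=N$, $$\frac{1}{|\Omega_L^{\mathcal{A}}|}\sum_{(\mathcal{B},(\varepsilon_k))\in\Omega_L^{\mathcal{A}}}\Bigl\langle T\sum_{k\in\mathcal{B}}\varepsilon_ke_k,\sum_{k\in\mathcal{B}}\varepsilon_kf_k\Bigr\rangle\ge(1-\kappa)\delta L.$$ In particular, there exist $\mathcal{B}\subset\mathcal{A}$ with $|\mathcal{B}|=L$ and $(\varepsilon_k)\in\mathcal{E}(\mathcal{B})$ such that $\bigl\langle T\sum_{k\in\mathcal{B}}\varepsilon_ke_k,\sum_{k\in\mathcal{B}}\varepsilon_kf_k\bigr\rangle\ge(1-\kappa)\delta L$.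
   Context: Standing assumptions: (B1) if $\langle x,y\rangle=0$ for all $y\in Y$ then $x=0$; (B2) if $\langle x,y\rangle=0$ for all $x\in X$ then $y=0$; (B3) there is $C_d>0$ with $|\langle x,y\rangle|\le C_d\|x\|\|y\|$; (B4) $\langle e_j,f_k\rangle=1$ if $j=k$ and $0$ otherwise; (B5) every $x\in X$ has the unique representation $x=\sum_j\langle x,f_j\rangle e_j$ converging in $\sigma(X,Y)$, the topology generated by the seminorms $x\mapsto|\langle x,y\rangle|$, $y\in Y$. Series $\sum a_je_j$ are required to converge in $\sigma(X,Y)$. $(e_j)$ is $C_u$-unconditional if $\|\sum\gamma_ja_je_j\|\le C_u\sup_k|\gamma_k|\|\sum a_je_j\|$; $C_s$-spreading if for every increasing $(n_j)$, $C_s^{-1}\|\sum a_je_{n_j}\|\le\|\sum a_je_j\|\le C_s\|\sum a_je_{n_j}\|$; $(C_u,C_s)$-subsymmetric if both. $\mathcal{E}(\mathcal{B})=\{(\varepsilon_k)\in\{\pm1\}^{\mathcal{B}}:\sum_{k\in\mathcal{B}}\varepsilon_k=0\}$ and $\Omega_L^{\mathcal{A}}=\{(\mathcal{B},(\varepsilon_k)):\mathcal{B}\subset\mathcal{A},|\mathcal{B}|=L,(\varepsilon_k)\in\mathcal{E}(\mathcal{B})\}$. *)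

theory Defs
  imports "HOL-Analysis.Analysis"
begin

text \<open>Convergence of the series sum_j a_j e_j to x in the topology sigma(X,Y)
  induced by the pairing b: for every y, the partial sums paired with y converge
  to b x y.\<close>
definition wsums :: "('x::real_vector \<Rightarrow> 'y \<Rightarrow> real) \<Rightarrow> (nat \<Rightarrow> 'x) \<Rightarrow> (nat \<Rightarrow> real) \<Rightarrow> 'x \<Rightarrow> bool" where
  "wsums b e a x \<longleftrightarrow> (\<forall>y. (\<lambda>n. b (\<Sum>j<n. a j *\<^sub>R e j) y) \<longlonglongrightarrow> b x y)"

definition dual_pair_basis ::
  "('x::real_normed_vector \<Rightarrow> 'y::real_normed_vector \<Rightarrow> real) \<Rightarrow> real \<Rightarrow> (nat \<Rightarrow> 'x) \<Rightarrow> (nat \<Rightarrow> 'y) \<Rightarrow> bool" where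
  "dual_pair_basis b Cd e f \<longleftrightarrow>
     bilinear b \<and>
     (\<forall>j. norm (e j) = 1) \<and> (\<forall>j. norm (f j) = 1) \<and>
     (\<forall>x. (\<forall>y. b x y = 0) \<longrightarrow> x = 0) \<and>
     (\<forall>y. (\<forall>x. b x y = 0) \<longrightarrow> y = 0) \<and>
     Cd > 0 \<and> (\<forall>x y. \<bar>b x y\<bar> \<le> Cd * norm x * norm y) \<and>
     (\<forall>j k. b (e j) (f k) = (if j = k then 1 else 0)) \<and>
     (\<forall>x. wsums b e (\<lambda>j. b x (f j)) x \<and>
          (\<forall>a. wsums b e a x \<longrightarrow> a = (\<lambda>j. b x (f j))))"

definition unconditional ::
  "('x::real_normed_vector \<Rightarrow> 'y \<Rightarrow> real) \<Rightarrow> real \<Rightarrow> (nat \<Rightarrow> 'x) \<Rightarrow> bool" where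
  "unconditional b Cu e \<longleftrightarrow>
     (\<forall>a x \<gamma>. wsums b e a x \<and> bounded (range \<gamma>) \<longrightarrow>
        (\<exists>x'. wsums b e (\<lambda>j. \<gamma> j * a j) x' \<and>
              norm x' \<le> Cu * (SUP k. \<bar>\<gamma> k\<bar>) * norm x))"

definition spreading ::
  "('x::real_normed_vector \<Rightarrow> 'y \<Rightarrow> real) \<Rightarrow> real \<Rightarrow> (nat \<Rightarrow> 'x) \<Rightarrow> bool" where
  "spreading b Cs e \<longleftrightarrow>
     (\<forall>a n. strict_mono n \<longrightarrow>
        ((\<exists>x. wsums b e a x) \<longleftrightarrow> (\<exists>x'. wsums b (e \<circ> n) a x')) \<and>
        (\<forall>x x'. wsums b e a x \<and> wsums b (e \<circ> n) a x' \<longrightarrow>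
            norm x' / Cs \<le> norm x \<and> norm x \<le> Cs * norm x'))"

definition subsymmetric ::
  "('x::real_normed_vector \<Rightarrow> 'y \<Rightarrow> real) \<Rightarrow> real \<Rightarrow> real \<Rightarrow> (nat \<Rightarrow> 'x) \<Rightarrow> bool" where
  "subsymmetric b Cu Cs e \<longleftrightarrow> unconditional b Cu e \<and> spreading b Cs e"

text \<open>E(B): sign choices on B summing to zero; represented extensionally
  (value 0 outside B).\<close>
definition signs_E :: "nat set \<Rightarrow> (nat \<Rightarrow> real) set" where
  "signs_E B = {\<epsilon>. (\<forall>k\<in>B. \<epsilon> k = 1 \<or> \<epsilon> k = -1) \<and> (\<forall>k. k \<notin> B \<longrightarrow> \<epsilon> k = 0)
                  \<and> (\<Sum>k\<in>B. \<epsilon> k) = 0}"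

definition Omega :: "nat \<Rightarrow> nat set \<Rightarrow> (nat set \<times> (nat \<Rightarrow> real)) set" where
  "Omega L A = {(B, \<epsilon>). B \<subseteq> A \<and> card B = L \<and> \<epsilon> \<in> signs_E B}"

end

theory Submission
  imports Defs "HOL-Library.Infinite_Set"
begin

lemma dpb:
  assumes "dual_pair_basis b Cd e f"
  shows dpb_bl: "bilinear b" and dpb_ne: "\<forall>j. norm (e j) = 1" and dpb_nf: "\<forall>j. norm (f j) = 1"
    and dpb_B1: "\<forall>x. (\<forall>y. b x y = 0) \<longrightarrow> x = 0"
    and dpb_Cd: "Cd > 0" and dpb_bd: "\<forall>x y. \<bar>b x y\<bar> \<le> Cd * norm x * norm y"
    and dpb_bio: "\<forall>j k. b (e j) (f k) = (if j = k then 1 else 0)"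
    and dpb_exp: "\<forall>x. wsums b e (\<lambda>j. b x (f j)) x \<and> (\<forall>a. wsums b e a x \<longrightarrow> a = (\<lambda>j. b x (f j)))"
  using assms unfolding dual_pair_basis_def by simp_all

lemma wsums_finite:
  assumes bl: "bilinear b" and z: "\<And>j. j \<ge> r \<Longrightarrow> a j = 0"
  shows "wsums b e a (\<Sum>j<r. a j *\<^sub>R e j)"
  unfolding wsums_def
proof
  fix y
  have "\<forall>\<^sub>F n in sequentially. b (\<Sum>j<n. a j *\<^sub>R e j) y = b (\<Sum>j<r. a j *\<^sub>R e j) y"
  proof (rule eventually_sequentiallyI[of r])
    fix n assume "r \<le> n"
    then have "(\<Sum>j<n. a j *\<^sub>R e j) = (\<Sum>j<r. a j *\<^sub>R e j)"
      by (intro sum.mono_neutral_right) (auto simp: z)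
    then show "b (\<Sum>j<n. a j *\<^sub>R e j) y = b (\<Sum>j<r. a j *\<^sub>R e j) y" by simp
  qed
  then show "(\<lambda>n. b (\<Sum>j<n. a j *\<^sub>R e j) y) \<longlonglongrightarrow> b (\<Sum>j<r. a j *\<^sub>R e j) y"
    by (rule tendsto_eventually)
qed

lemma wsums_unique:
  assumes B: "dual_pair_basis b Cd e f" and "wsums b e a x" "wsums b e a x'"
  shows "x = x'"
proof -
  have bl: "bilinear b" using dpb_bl[OF B] by simp
  have "\<forall>y. b (x - x') y = 0"
  proof
    fix y
    have l1: "(\<lambda>n. b (\<Sum>j<n. a j *\<^sub>R e j) y) \<longlonglongrightarrow> b x y" using assms(2) unfolding wsums_def by simp
    have l2: "(\<lambda>n. b (\<Sum>j<n. a j *\<^sub>R e j) y) \<longlonglongrightarrow> b x' y" using assms(3) unfolding wsums_def by simp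
    have "b x y = b x' y" using LIMSEQ_unique[OF l1 l2] .
    then show "b (x - x') y = 0" by (simp add: bilinear_lsub[OF bl])
  qed
  then have "x - x' = 0" using dpb_B1[OF B] by blast
  then show ?thesis by simp
qed

lemma Cd_ge1:
  assumes B: "dual_pair_basis b Cd e f" shows "Cd \<ge> 1"
proof -
  have "\<bar>b (e 0) (f 0)\<bar> \<le> Cd * norm (e 0) * norm (f 0)" using dpb_bd[OF B] by simp
  moreover have "b (e 0) (f 0) = 1" "norm (e 0) = 1" "norm (f 0) = 1" using dpb_bio[OF B] dpb_ne[OF B] dpb_nf[OF B] by auto
  ultimately show ?thesis by simp
qed

lemma spread_raw:
  assumes B: "dual_pair_basis b Cd e f" and sp: "spreading b Cs e"
    and n: "strict_mono_on {..<r} n"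
  shows "norm (\<Sum>j<r. c j *\<^sub>R e (n j)) / Cs \<le> norm (\<Sum>j<r. c j *\<^sub>R e j)
       \<and> norm (\<Sum>j<r. c j *\<^sub>R e j) \<le> Cs * norm (\<Sum>j<r. c j *\<^sub>R e (n j))"
proof (cases "r = 0")
  case True then show ?thesis by simp
next
  case False
  have bl: "bilinear b" using dpb_bl[OF B] by simp
  define n' where "n' j = (if j < r then n j else n (r - 1) + 1 + j)" for j
  have sm: "strict_mono n'"
  proof (rule strict_monoI)
    fix i j :: nat assume ij: "i < j"
    show "n' i < n' j"
    proof (cases "j < r")
      case True then show ?thesis using ij n by (auto simp: n'_def strict_mono_on_def)
    next
      case jr: False
      show ?thesis
      proof (cases "i < r")
        case True
        have ir: "i \<le> r - 1" using True by simp
        have "n i \<le> n (r - 1)"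
        proof (cases "i = r - 1")
          case True then show ?thesis by simp
        next
          case ne: False
          then have "i < r - 1" using ir by simp
          then have "n i < n (r - 1)" using n \<open>r \<noteq> 0\<close> unfolding strict_mono_on_def by auto
          then show ?thesis by simp
        qed
        then show ?thesis using True jr by (simp add: n'_def)
      next
        case False then show ?thesis using jr ij by (simp add: n'_def)
      qed
    qed
  qed
  define a where "a j = (if j < r then c j else 0)" for j
  have w1: "wsums b e a (\<Sum>j<r. a j *\<^sub>R e j)" by (rule wsums_finite[OF bl]) (simp add: a_def)
  have w2: "wsums b (e \<circ> n') a (\<Sum>j<r. a j *\<^sub>R (e \<circ> n') j)" by (rule wsums_finite[OF bl]) (simp add: a_def)
  have e1: "(\<Sum>j<r. a j *\<^sub>R e j) = (\<Sum>j<r. c j *\<^sub>R e j)" by (simp add: a_def)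
  have e2: "(\<Sum>j<r. a j *\<^sub>R (e \<circ> n') j) = (\<Sum>j<r. c j *\<^sub>R e (n j))" by (simp add: a_def n'_def)
  have H: "\<forall>x x'. wsums b e a x \<and> wsums b (e \<circ> n') a x' \<longrightarrow> norm x' / Cs \<le> norm x \<and> norm x \<le> Cs * norm x'"
    using sp sm unfolding spreading_def by simp
  have "norm (\<Sum>j<r. a j *\<^sub>R (e \<circ> n') j) / Cs \<le> norm (\<Sum>j<r. a j *\<^sub>R e j) \<and> norm (\<Sum>j<r. a j *\<^sub>R e j) \<le> Cs * norm (\<Sum>j<r. a j *\<^sub>R (e \<circ> n') j)"
    using H w1 w2 by simp
  then show ?thesis unfolding e1 e2 .
qed

lemma Cs_ge1:
  assumes B: "dual_pair_basis b Cd e f" and sp: "spreading b Cs e" shows "Cs \<ge> 1"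
proof -
  have sm: "strict_mono_on {..<1} (\<lambda>j::nat. j)" by (auto simp: strict_mono_on_def)
  have H: "norm (\<Sum>j<1. (1::real) *\<^sub>R e j) \<le> Cs * norm (\<Sum>j<1. (1::real) *\<^sub>R e j)"
    using conjunct2[OF spread_raw[OF B sp sm, of "\<lambda>_. 1"]] .
  have e: "(\<Sum>j<1. (1::real) *\<^sub>R e j) = e 0" by simp
  have n: "norm (e 0) = 1" using dpb_ne[OF B] by simp
  from H show ?thesis unfolding e n by simp
qed

lemma spread2:
  fixes r :: nat
  assumes B: "dual_pair_basis b Cd e f" and sp: "spreading b Cs e"
    and n1: "strict_mono_on {..<r} n1" and n2: "strict_mono_on {..<r} n2"
  shows "norm (\<Sum>j<r. c j *\<^sub>R e (n2 j)) \<le> Cs^2 * norm (\<Sum>j<r. c j *\<^sub>R e (n1 j))"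
proof -
  have Cs: "Cs \<ge> 1" by (rule Cs_ge1[OF B sp])
  have a: "norm (\<Sum>j<r. c j *\<^sub>R e (n2 j)) \<le> Cs * norm (\<Sum>j<r. c j *\<^sub>R e j)"
    using spread_raw[OF B sp n2, of c] Cs by (simp add: divide_le_eq mult.commute)
  have b: "norm (\<Sum>j<r. c j *\<^sub>R e j) \<le> Cs * norm (\<Sum>j<r. c j *\<^sub>R e (n1 j))"
    using spread_raw[OF B sp n1, of c] by simp
  have "Cs * norm (\<Sum>j<r. c j *\<^sub>R e j) \<le> Cs * (Cs * norm (\<Sum>j<r. c j *\<^sub>R e (n1 j)))"
    using b Cs by simp
  with a show ?thesis by (simp add: power2_eq_square mult.assoc)
qed

lemma proj_raw:
  assumes B: "dual_pair_basis b Cd e f" and un: "unconditional b Cu e" and F: "finite F"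
  shows "\<exists>S. 0 \<le> S \<and> S \<le> 1 \<and> norm (\<Sum>k\<in>F. b x (f k) *\<^sub>R e k) \<le> Cu * S * norm x"
proof -
  have bl: "bilinear b" using dpb_bl[OF B] by simp
  have w: "wsums b e (\<lambda>j. b x (f j)) x" using dpb_exp[OF B] by simp
  define \<gamma> where "\<gamma> j = (if j \<in> F then 1 else (0::real))" for j
  have bd: "bounded (range \<gamma>)"
    by (rule bounded_subset[of "{0,1}"]) (auto simp: \<gamma>_def)
  obtain x' where x': "wsums b e (\<lambda>j. \<gamma> j * b x (f j)) x'"
      "norm x' \<le> Cu * (SUP k. \<bar>\<gamma> k\<bar>) * norm x"
  proof -
    have "\<exists>x'. wsums b e (\<lambda>j. \<gamma> j * b x (f j)) x' \<and> norm x' \<le> Cu * (SUP k. \<bar>\<gamma> k\<bar>) * norm x"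
      using un w bd unfolding unconditional_def by simp
    then show ?thesis using that by blast
  qed
  obtain r where r: "F \<subseteq> {..<r}" using F finite_nat_bounded by blast
  have wz: "wsums b e (\<lambda>j. \<gamma> j * b x (f j)) (\<Sum>j<r. (\<gamma> j * b x (f j)) *\<^sub>R e j)"
    by (rule wsums_finite[OF bl]) (use r in \<open>auto simp: \<gamma>_def\<close>)
  have "(\<Sum>k\<in>F. b x (f k) *\<^sub>R e k) = (\<Sum>j<r. (\<gamma> j * b x (f j)) *\<^sub>R e j)"
    using r by (intro sum.mono_neutral_cong_left) (auto simp: \<gamma>_def)
  also have "(\<Sum>j<r. (\<gamma> j * b x (f j)) *\<^sub>R e j) = x'" by (rule wsums_unique[OF B wz x'(1)])
  finally have xe: "x' = (\<Sum>k\<in>F. b x (f k) *\<^sub>R e k)" by (rule sym)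
  have bda: "bdd_above (range (\<lambda>k. \<bar>\<gamma> k\<bar>))"
    by (rule bdd_aboveI[of _ 1]) (auto simp: \<gamma>_def)
  have s1: "(SUP k. \<bar>\<gamma> k\<bar>) \<le> 1" by (rule cSUP_least) (auto simp: \<gamma>_def)
  have s0: "0 \<le> (SUP k. \<bar>\<gamma> k\<bar>)"
    by (rule order_trans[OF abs_ge_zero cSUP_upper[OF UNIV_I bda]])
  have "norm (\<Sum>k\<in>F. b x (f k) *\<^sub>R e k) \<le> Cu * (SUP k. \<bar>\<gamma> k\<bar>) * norm x"
    using x'(2) xe by simp
  with s0 s1 show ?thesis by blast
qed

lemma Cu_ge0:
  assumes B: "dual_pair_basis b Cd e f" and un: "unconditional b Cu e" shows "Cu \<ge> 0"
proof (rule ccontr)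
  assume "\<not> Cu \<ge> 0"
  obtain S where S: "0 \<le> S" "S \<le> 1" "norm (\<Sum>k\<in>{0}. b (e 0) (f k) *\<^sub>R e k) \<le> Cu * S * norm (e 0)"
    using proj_raw[OF B un, of "{0}" "e 0"] by blast
  have "b (e 0) (f 0) = 1" "norm (e 0) = 1" using dpb_bio[OF B] dpb_ne[OF B] by auto
  then have "1 \<le> Cu * S" using S(3) by simp
  moreover have "Cu * S \<le> 0" using \<open>\<not> Cu \<ge> 0\<close> S(1) by (simp add: mult_nonpos_nonneg mult_le_0_iff)
  ultimately show False by simp
qed

lemma proj:
  assumes B: "dual_pair_basis b Cd e f" and un: "unconditional b Cu e" and F: "finite F"
  shows "norm (\<Sum>k\<in>F. b x (f k) *\<^sub>R e k) \<le> Cu * norm x"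
proof -
  obtain S where S: "0 \<le> S" "S \<le> 1" "norm (\<Sum>k\<in>F. b x (f k) *\<^sub>R e k) \<le> Cu * S * norm x"
    using proj_raw[OF B un F] by blast
  have "Cu * S * norm x \<le> Cu * 1 * norm x"
    using Cu_ge0[OF B un] S by (intro mult_right_mono mult_left_mono) simp_all
  with S(3) show ?thesis by simp
qed


lemma sum_mod_shift:
  fixes g :: "nat \<Rightarrow> real"
  assumes "t < N"
  shows "(\<Sum>m<N. g ((t + m) mod N)) = (\<Sum>i<N. g i)"
proof -
  have inj: "inj_on (\<lambda>m. (t + m) mod N) {..<N}"
  proof (rule inj_onI)
    fix m m' assume mm: "m \<in> {..<N}" "m' \<in> {..<N}" "(t + m) mod N = (t + m') mod N"
    have inv: "((t + q) mod N + N - t) mod N = q" if "q < N" for q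
    proof (cases "t + q < N")
      case True
      then have "(t + q) mod N = t + q" by simp
      then have "((t + q) mod N + N - t) mod N = (q + N) mod N" by simp
      also have "\<dots> = q" using that by simp
      finally show ?thesis .
    next
      case False
      then have "(t + q) mod N = t + q - N" using that assms by (simp add: mod_if)
      then have "((t + q) mod N + N - t) mod N = q mod N" using False by simp
      also have "\<dots> = q" using that by simp
      finally show ?thesis .
    qed
    have "m = ((t + m) mod N + N - t) mod N" using inv mm(1) by simp
    also have "\<dots> = ((t + m') mod N + N - t) mod N" using mm(3) by simp
    also have "\<dots> = m'" using inv mm(2) by simp
    finally show "m = m'" .
  qed
  have im: "(\<lambda>m. (t + m) mod N) ` {..<N} = {..<N}"
  proof (rule endo_inj_surj)
    show "(\<lambda>m. (t + m) mod N) ` {..<N} \<subseteq> {..<N}" using assms by auto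
  qed (use inj in auto)
  have "(\<Sum>i<N. g i) = (\<Sum>i\<in>(\<lambda>m. (t + m) mod N) ` {..<N}. g i)" by (simp add: im)
  also have "\<dots> = (\<Sum>m<N. g ((t + m) mod N))" by (simp add: sum.reindex[OF inj])
  finally show ?thesis by simp
qed

lemma bidem:
  assumes B: "dual_pair_basis b Cd e f" and sp: "spreading b Cs e" and un: "unconditional b Cu e"
    and A: "finite A" "card A = N"
  shows "\<bar>\<Sum>j\<in>A. b x (f j)\<bar> * norm (\<Sum>j\<in>A. e j) \<le> 2 * real N * Cs^2 * Cu * norm x"
proof -
  define k where "k = enumerate A"
  define a where "a j = b x (f j)" for j
  have bij: "bij_betw k {..<N} A" unfolding k_def using finite_bij_enumerate[OF A(1)] A(2) by simp
  have km: "k i < k j" if "i < j" "j < N" for i j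
    unfolding k_def using finite_enumerate_mono[OF that(1) A(1)] that A(2) by simp
  define s where "s = (\<Sum>i<N. a (k i))"
  have s: "(\<Sum>j\<in>A. b x (f j)) = s"
    unfolding s_def a_def using sum.reindex_bij_betw[OF bij, of "\<lambda>j. b x (f j)"] by simp
  have one: "(\<Sum>j\<in>A. e j) = (\<Sum>t<N. e (k t))"
    using sum.reindex_bij_betw[OF bij, of e] by simp
  define w where "w m = (\<Sum>t<N. a (k ((t + m) mod N)) *\<^sub>R e (k t))" for m
  define u where "u m = (\<Sum>t<N-m. a (k (t + m)) *\<^sub>R e (k t))" for m
  define v where "v m = (\<Sum>j<m. a (k j) *\<^sub>R e (k (j + (N - m))))" for m
  have sumw: "(\<Sum>m<N. w m) = s *\<^sub>R (\<Sum>t<N. e (k t))"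
  proof -
    have "(\<Sum>m<N. w m) = (\<Sum>t<N. (\<Sum>m<N. a (k ((t + m) mod N))) *\<^sub>R e (k t))"
      unfolding w_def scaleR_sum_left by (rule sum.swap)
    also have "\<dots> = (\<Sum>t<N. s *\<^sub>R e (k t))"
      unfolding s_def by (intro sum.cong refl) (simp add: sum_mod_shift[where g = "\<lambda>i. a (k i)"])
    finally show ?thesis by (simp add: scaleR_sum_right)
  qed
  have wuv: "w m = u m + v m" if m: "m < N" for m
  proof -
    have split: "{..<N} = {..<N-m} \<union> {N-m..<N}" by auto
    have "w m = (\<Sum>t<N-m. a (k ((t + m) mod N)) *\<^sub>R e (k t))
              + (\<Sum>t\<in>{N-m..<N}. a (k ((t + m) mod N)) *\<^sub>R e (k t))"
      unfolding w_def by (subst split, rule sum.union_disjoint) auto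
    moreover have "(\<Sum>t<N-m. a (k ((t + m) mod N)) *\<^sub>R e (k t)) = u m"
      unfolding u_def by (intro sum.cong refl) auto
    moreover have "(\<Sum>t\<in>{N-m..<N}. a (k ((t + m) mod N)) *\<^sub>R e (k t)) = v m"
    proof -
      have "{N-m..<N} = {0 + (N-m)..<m + (N-m)}" using m by simp
      then have "(\<Sum>t\<in>{N-m..<N}. a (k ((t + m) mod N)) *\<^sub>R e (k t))
          = (\<Sum>j\<in>{0..<m}. a (k ((j + (N-m) + m) mod N)) *\<^sub>R e (k (j + (N-m))))"
        by (simp only: sum.shift_bounds_nat_ivl)
      also have "\<dots> = v m" unfolding v_def atLeast0LessThan
      proof (intro sum.cong refl)
        fix j assume "j \<in> {..<m}"
        then have "(j + (N-m) + m) mod N = j" using m by (simp add: mod_if)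
        then show "a (k ((j + (N-m) + m) mod N)) *\<^sub>R e (k (j + (N-m))) = a (k j) *\<^sub>R e (k (j + (N-m)))"
          by simp
      qed
      finally show ?thesis .
    qed
    ultimately show ?thesis by simp
  qed
  have nu: "norm (u m) \<le> Cs^2 * (Cu * norm x)" if m: "m < N" for m
  proof -
    have sm1: "strict_mono_on {..<N-m} (\<lambda>t. k (t + m))"
      by (rule strict_mono_onI) (use km in auto)
    have sm2: "strict_mono_on {..<N-m} k"
      by (rule strict_mono_onI) (use km in auto)
    have "norm (u m) \<le> Cs^2 * norm (\<Sum>t<N-m. a (k (t + m)) *\<^sub>R e (k (t + m)))"
      unfolding u_def using spread2[OF B sp sm1 sm2, of "\<lambda>t. a (k (t + m))"] by simp
    also have "(\<Sum>t<N-m. a (k (t + m)) *\<^sub>R e (k (t + m)))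
        = (\<Sum>j\<in>(\<lambda>t. k (t + m)) ` {..<N-m}. b x (f j) *\<^sub>R e j)"
      by (subst sum.reindex) (auto simp: a_def intro!: strict_mono_on_imp_inj_on[OF sm1])
    also have "norm \<dots> \<le> Cu * norm x" by (rule proj[OF B un]) simp
    finally show ?thesis
      using Cs_ge1[OF B sp] by (simp add: mult_left_mono)
  qed
  have nv: "norm (v m) \<le> Cs^2 * (Cu * norm x)" if m: "m < N" for m
  proof -
    have sm1: "strict_mono_on {..<m} k"
      by (rule strict_mono_onI) (use km m in auto)
    have sm2: "strict_mono_on {..<m} (\<lambda>j. k (j + (N - m)))"
      by (rule strict_mono_onI) (use km m in auto)
    have "norm (v m) \<le> Cs^2 * norm (\<Sum>j<m. a (k j) *\<^sub>R e (k j))"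
      unfolding v_def using spread2[OF B sp sm1 sm2, of "\<lambda>j. a (k j)"] by simp
    also have "(\<Sum>j<m. a (k j) *\<^sub>R e (k j)) = (\<Sum>j\<in>k ` {..<m}. b x (f j) *\<^sub>R e j)"
      by (subst sum.reindex) (auto simp: a_def intro!: strict_mono_on_imp_inj_on[OF sm1])
    also have "norm \<dots> \<le> Cu * norm x" by (rule proj[OF B un]) simp
    finally show ?thesis
      using Cs_ge1[OF B sp] by (simp add: mult_left_mono)
  qed
  have "\<bar>s\<bar> * norm (\<Sum>t<N. e (k t)) = norm (\<Sum>m<N. u m + v m)"
    using sumw wuv by simp
  also have "\<dots> \<le> (\<Sum>m<N. norm (u m) + norm (v m))"
    by (rule order_trans[OF norm_sum]) (intro sum_mono norm_triangle_ineq)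
  also have "\<dots> \<le> (\<Sum>m<N. 2 * (Cs^2 * (Cu * norm x)))"
    by (intro sum_mono) (use nu nv in force)
  also have "\<dots> = 2 * real N * Cs^2 * Cu * norm x" by simp
  finally show ?thesis using s one by simp
qed


lemma Omega_mem:
  assumes "(B, \<epsilon>) \<in> Omega L A"
  shows "B \<subseteq> A" "card B = L" "\<And>k. k \<in> B \<Longrightarrow> \<epsilon> k = 1 \<or> \<epsilon> k = -1"
    "\<And>k. k \<notin> B \<Longrightarrow> \<epsilon> k = 0" "(\<Sum>k\<in>B. \<epsilon> k) = 0"
  using assms by (auto simp: Omega_def signs_E_def)

lemma Omega_finite:
  assumes A: "finite A" shows "finite (Omega L A)"
proof -
  have "Omega L A \<subseteq> Pow A \<times> {\<epsilon>. \<forall>x. (x \<in> A \<longrightarrow> \<epsilon> x \<in> {-1,0,1}) \<and> (x \<notin> A \<longrightarrow> \<epsilon> x = 0)}"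
  proof
    fix p assume p: "p \<in> Omega L A"
    obtain B \<epsilon> where pe: "p = (B, \<epsilon>)" by fastforce
    note m = Omega_mem[OF p[unfolded pe]]
    show "p \<in> Pow A \<times> {\<epsilon>. \<forall>x. (x \<in> A \<longrightarrow> \<epsilon> x \<in> {-1,0,1}) \<and> (x \<notin> A \<longrightarrow> \<epsilon> x = 0)}"
      unfolding pe using m(1) m(3) m(4) by auto
  qed
  moreover have "finite (Pow A \<times> {\<epsilon>. \<forall>x. (x \<in> A \<longrightarrow> \<epsilon> x \<in> {-1,0,1::real}) \<and> (x \<notin> A \<longrightarrow> \<epsilon> x = 0)})"
    using A by (intro finite_cartesian_product finite_set_of_finite_funs) auto
  ultimately show ?thesis by (rule finite_subset)
qed

lemma Omega_nonempty:
  assumes A: "finite A" and L: "L \<le> card A" "even L"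
  shows "Omega L A \<noteq> {}"
proof -
  obtain B where B: "B \<subseteq> A" "card B = L" "finite B" using obtain_subset_with_card_n[OF L(1)] by blast
  have "L div 2 \<le> card B" using B by simp
  then obtain B1 where B1: "B1 \<subseteq> B" "card B1 = L div 2" "finite B1" using obtain_subset_with_card_n by blast
  define \<epsilon> where "\<epsilon> k = (if k \<in> B1 then 1 else if k \<in> B then -1 else (0::real))" for k
  have h: "L - L div 2 = L div 2" using L(2) by (auto elim: evenE)
  have cd: "card (B - B1) = L div 2" using B B1 h by (simp add: card_Diff_subset)
  have "(\<Sum>k\<in>B. \<epsilon> k) = (\<Sum>k\<in>B - B1. \<epsilon> k) + (\<Sum>k\<in>B1. \<epsilon> k)"
    using B B1 by (simp add: sum.subset_diff)
  also have "(\<Sum>k\<in>B - B1. \<epsilon> k) = (\<Sum>k\<in>B - B1. -1)" by (rule sum.cong) (auto simp: \<epsilon>_def)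
  also have "(\<Sum>k\<in>B1. \<epsilon> k) = (\<Sum>k\<in>B1. 1)" by (rule sum.cong) (auto simp: \<epsilon>_def)
  finally have "(\<Sum>k\<in>B. \<epsilon> k) = 0" using cd B1(2) by simp
  then have "(B, \<epsilon>) \<in> Omega L A" using B B1 by (auto simp: Omega_def signs_E_def \<epsilon>_def)
  then show ?thesis by blast
qed

definition swp :: "nat \<Rightarrow> nat \<Rightarrow> nat \<Rightarrow> nat" where
  "swp a c x = (if x = a then c else if x = c then a else x)"

lemma swp_swp [simp]: "swp a c (swp a c x) = x" by (simp add: swp_def)
lemma swp_inj: "inj (swp a c)" by (metis injI swp_swp)
lemma swp_in: "a \<in> A \<Longrightarrow> c \<in> A \<Longrightarrow> swp a c x \<in> A \<longleftrightarrow> x \<in> A"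
  by (auto simp: swp_def)
lemma swp_img2 [simp]: "swp a c ` swp a c ` B = B"
  by (simp add: image_comp comp_def)

lemma Omega_swap:
  assumes a: "a \<in> A" "c \<in> A" and p: "(B, \<epsilon>) \<in> Omega L A"
  shows "(swp a c ` B, \<epsilon> \<circ> swp a c) \<in> Omega L A"
proof -
  note m = Omega_mem[OF p]
  have sub: "swp a c ` B \<subseteq> A" using m(1) swp_in[OF a] by auto
  have card: "card (swp a c ` B) = L" using m(2) card_image[OF inj_on_subset[OF swp_inj]] by auto
  have mem: "k \<in> swp a c ` B \<longleftrightarrow> swp a c k \<in> B" for k
    by (metis image_eqI imageE swp_swp)
  have s: "(\<Sum>k\<in>swp a c ` B. (\<epsilon> \<circ> swp a c) k) = (\<Sum>k\<in>B. \<epsilon> k)"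
    by (subst sum.reindex[OF inj_on_subset[OF swp_inj]]) (auto simp: comp_def)
  show ?thesis unfolding Omega_def signs_E_def
    using sub card s m(3-5) mem by auto
qed

definition coef :: "nat \<Rightarrow> nat set \<Rightarrow> nat \<Rightarrow> nat \<Rightarrow> real" where
  "coef L A j k = (\<Sum>p\<in>Omega L A. snd p j * snd p k)"

lemma coef_swap:
  assumes a: "a \<in> A" "c \<in> A"
  shows "coef L A (swp a c j) (swp a c k) = coef L A j k"
proof -
  define \<Phi> where "\<Phi> p = (swp a c ` fst p, snd p \<circ> swp a c)" for p :: "nat set \<times> (nat \<Rightarrow> real)"
  have inv: "\<Phi> (\<Phi> p) = p" for p by (cases p) (auto simp: \<Phi>_def comp_def)
  have inO: "\<Phi> p \<in> Omega L A" if "p \<in> Omega L A" for p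
    using Omega_swap[OF a, of "fst p" "snd p"] that by (cases p) (auto simp: \<Phi>_def)
  have "coef L A j k = (\<Sum>p\<in>Omega L A. snd (\<Phi> p) (swp a c j) * snd (\<Phi> p) (swp a c k))"
    unfolding coef_def by (simp add: \<Phi>_def)
  also have "\<dots> = (\<Sum>p\<in>Omega L A. snd p (swp a c j) * snd p (swp a c k))"
    by (rule sum.reindex_bij_witness[of _ \<Phi> \<Phi>]) (auto simp: inv inO)
  finally show ?thesis unfolding coef_def by simp
qed

lemma coef_diag:
  assumes "a0 \<in> A" "j \<in> A" shows "coef L A j j = coef L A a0 a0"
  using coef_swap[OF assms, where j=a0 and k=a0 and L=L] by (simp add: swp_def)

lemma coef_off:
  assumes a: "a0 \<in> A" "a1 \<in> A" "a0 \<noteq> a1" and jk: "j \<in> A" "k \<in> A" "j \<noteq> k"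
  shows "coef L A j k = coef L A a0 a1"
proof -
  define k1 where "k1 = swp a0 j a1"
  have 1: "coef L A a0 a1 = coef L A j k1"
    using coef_swap[OF a(1) jk(1), where j=a0 and k=a1 and L=L] by (simp add: k1_def swp_def)
  have k1A: "k1 \<in> A" using swp_in[OF a(1) jk(1)] a(2) by (simp add: k1_def)
  have k1j: "k1 \<noteq> j" using a(3) by (auto simp: k1_def swp_def)
  have 2: "coef L A j k1 = coef L A j k"
    using coef_swap[OF k1A jk(2), where j=j and k=k1 and L=L] k1j jk(3) by (simp add: swp_def)
  show ?thesis using 1 2 by simp
qed

lemma quad_expand:
  assumes p: "(B, \<epsilon>) \<in> Omega L A" and A: "finite A"
  shows "(\<Sum>j\<in>A. \<epsilon> j * \<epsilon> j) = real L" "(\<Sum>j\<in>A. \<epsilon> j) = 0"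
proof -
  note m = Omega_mem[OF p]
  have fB: "finite B" using m(1) A finite_subset by blast
  have "(\<Sum>j\<in>A. \<epsilon> j * \<epsilon> j) = (\<Sum>j\<in>B. \<epsilon> j * \<epsilon> j)"
    using m(1,4) A by (intro sum.mono_neutral_right) auto
  also have "\<dots> = (\<Sum>j\<in>B. 1)"
  proof (intro sum.cong refl)
    fix x assume "x \<in> B"
    then have "\<epsilon> x = 1 \<or> \<epsilon> x = -1" using m(3) by blast
    then show "\<epsilon> x * \<epsilon> x = 1" by auto
  qed
  finally show "(\<Sum>j\<in>A. \<epsilon> j * \<epsilon> j) = real L" using m(2) by simp
  have "(\<Sum>j\<in>A. \<epsilon> j) = (\<Sum>j\<in>B. \<epsilon> j)"
    using m(1,4) A by (intro sum.mono_neutral_right) auto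
  then show "(\<Sum>j\<in>A. \<epsilon> j) = 0" using m(5) by simp
qed

lemma avg_formula:
  fixes t :: "nat \<Rightarrow> nat \<Rightarrow> real"
  assumes A: "finite A" "card A = N" and N: "N \<ge> 2"
  shows "(\<Sum>p\<in>Omega L A. \<Sum>j\<in>A. \<Sum>k\<in>A. snd p j * snd p k * t j k)
     = real (card (Omega L A)) * real L * (real N * (\<Sum>j\<in>A. t j j) - (\<Sum>j\<in>A. \<Sum>k\<in>A. t j k))
       / (real N * (real N - 1))"
proof -
  let ?O = "Omega L A"
  let ?M = "real (card ?O)"
  let ?D = "\<Sum>j\<in>A. t j j"
  let ?S = "\<Sum>j\<in>A. \<Sum>k\<in>A. t j k"
  have "card A \<ge> 2" using A N by simp
  then obtain a0 a1 where a: "a0 \<in> A" "a1 \<in> A" "a0 \<noteq> a1"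
  proof -
    have "\<not> card A \<le> Suc 0" using \<open>card A \<ge> 2\<close> by simp
    then show ?thesis using that card_le_Suc0_iff_eq[OF A(1)] by blast
  qed
  define d where "d = coef L A a0 a0"
  define c where "c = coef L A a0 a1"
  have cjk: "coef L A j k = (if j = k then d else c)" if "j \<in> A" "k \<in> A" for j k
    using coef_diag[OF a(1)] coef_off[OF a] that by (auto simp: d_def c_def)
  have rowsum: "(\<Sum>k\<in>A. coef L A j k * g k) = d * g j + c * (\<Sum>k\<in>A - {j}. g k)" if j: "j \<in> A" for j g
  proof -
    have "(\<Sum>k\<in>A. coef L A j k * g k) = coef L A j j * g j + (\<Sum>k\<in>A - {j}. coef L A j k * g k)"
      using A(1) j by (simp add: sum.remove)
    also have "(\<Sum>k\<in>A - {j}. coef L A j k * g k) = (\<Sum>k\<in>A - {j}. c * g k)"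
      using j cjk by (intro sum.cong) auto
    finally show ?thesis using cjk j by (simp add: sum_distrib_left)
  qed
  have lhs: "(\<Sum>p\<in>?O. \<Sum>j\<in>A. \<Sum>k\<in>A. snd p j * snd p k * t j k) = (\<Sum>j\<in>A. \<Sum>k\<in>A. coef L A j k * t j k)"
  proof -
    have "(\<Sum>p\<in>?O. \<Sum>j\<in>A. \<Sum>k\<in>A. snd p j * snd p k * t j k) = (\<Sum>j\<in>A. \<Sum>p\<in>?O. \<Sum>k\<in>A. snd p j * snd p k * t j k)"
      by (rule sum.swap)
    also have "\<dots> = (\<Sum>j\<in>A. \<Sum>k\<in>A. \<Sum>p\<in>?O. snd p j * snd p k * t j k)"
      by (intro sum.cong refl) (rule sum.swap)
    also have "\<dots> = (\<Sum>j\<in>A. \<Sum>k\<in>A. coef L A j k * t j k)"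
      unfolding coef_def by (simp add: sum_distrib_right)
    finally show ?thesis .
  qed
  have diag: "(\<Sum>j\<in>A. coef L A j j) = ?M * real L"
  proof -
    have "(\<Sum>j\<in>A. coef L A j j) = (\<Sum>p\<in>?O. \<Sum>j\<in>A. snd p j * snd p j)"
      unfolding coef_def by (rule sum.swap)
    also have "\<dots> = (\<Sum>p\<in>?O. real L)"
      by (intro sum.cong refl) (metis prod.collapse quad_expand(1)[OF _ A(1)])
    finally show ?thesis by simp
  qed
  have tot: "(\<Sum>j\<in>A. \<Sum>k\<in>A. coef L A j k) = 0"
  proof -
    have "(\<Sum>j\<in>A. \<Sum>k\<in>A. coef L A j k) = (\<Sum>j\<in>A. \<Sum>p\<in>?O. \<Sum>k\<in>A. snd p j * snd p k)"
      unfolding coef_def by (intro sum.cong refl) (rule sum.swap)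
    also have "\<dots> = (\<Sum>p\<in>?O. \<Sum>j\<in>A. \<Sum>k\<in>A. snd p j * snd p k)"
      by (rule sum.swap)
    also have "\<dots> = (\<Sum>p\<in>?O. (\<Sum>j\<in>A. snd p j) * (\<Sum>k\<in>A. snd p k))"
      by (simp add: sum_product)
    also have "\<dots> = 0"
      by (intro sum.neutral ballI) (metis mult_zero_left prod.collapse quad_expand(2)[OF _ A(1)])
    finally show ?thesis .
  qed
  have cardm: "card (A - {j}) = N - 1" if "j \<in> A" for j using that A by simp
  have d_eq: "real N * d = ?M * real L"
    using diag cjk by (simp add: A(2)[symmetric])
  have tot2: "(\<Sum>j\<in>A. \<Sum>k\<in>A. coef L A j k) = real N * (d + c * (real N - 1))"
  proof -
    have "(\<Sum>j\<in>A. \<Sum>k\<in>A. coef L A j k) = (\<Sum>j\<in>A. d + c * (real N - 1))"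
    proof (intro sum.cong refl)
      fix j assume j: "j \<in> A"
      have "(\<Sum>k\<in>A. coef L A j k) = (\<Sum>k\<in>A. coef L A j k * 1)" by simp
      also have "\<dots> = d + c * real (card (A - {j}))" using rowsum[OF j, of "\<lambda>_. 1"] by simp
      finally show "(\<Sum>k\<in>A. coef L A j k) = d + c * (real N - 1)" using cardm[OF j] N by simp
    qed
    then show ?thesis using A by simp
  qed
  have c_eq: "c * (real N - 1) = - d" using tot tot2 N by simp
  have main: "(\<Sum>j\<in>A. \<Sum>k\<in>A. coef L A j k * t j k) = d * ?D + c * (?S - ?D)"
  proof -
    have "(\<Sum>j\<in>A. \<Sum>k\<in>A. coef L A j k * t j k) = (\<Sum>j\<in>A. d * t j j + c * (\<Sum>k\<in>A - {j}. t j k))"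
      using rowsum by (intro sum.cong) auto
    also have "\<dots> = d * ?D + c * (\<Sum>j\<in>A. \<Sum>k\<in>A - {j}. t j k)"
      by (simp add: sum.distrib sum_distrib_left)
    also have "(\<Sum>j\<in>A. \<Sum>k\<in>A - {j}. t j k) = ?S - ?D"
    proof -
      have "(\<Sum>j\<in>A. \<Sum>k\<in>A. t j k) = (\<Sum>j\<in>A. t j j + (\<Sum>k\<in>A - {j}. t j k))"
        using A(1) by (intro sum.cong refl) (simp add: sum.remove)
      then show ?thesis by (simp add: sum.distrib)
    qed
    finally show ?thesis .
  qed
  have Npos: "real N > 1" using N by simp
  have dd: "d = ?M * real L / real N" using d_eq Npos by (simp add: field_simps)
  have cc: "c = - d / (real N - 1)" using c_eq Npos by (simp add: field_simps)
  show ?thesis unfolding lhs main dd cc using Npos by (simp add: field_simps)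
qed


lemma bsum1:
  assumes "bilinear b" shows "b (\<Sum>i\<in>F. g i) y = (\<Sum>i\<in>F. b (g i) y)"
proof (cases "finite F")
  case True then show ?thesis
    by (induction F rule: finite_induct) (simp_all add: bilinear_lzero[OF assms] bilinear_ladd[OF assms])
next
  case False then show ?thesis by (simp add: bilinear_lzero[OF assms])
qed

lemma bsum2:
  assumes "bilinear b" shows "b x (\<Sum>i\<in>F. g i) = (\<Sum>i\<in>F. b x (g i))"
proof (cases "finite F")
  case True then show ?thesis
    by (induction F rule: finite_induct) (simp_all add: bilinear_rzero[OF assms] bilinear_radd[OF assms])
next
  case False then show ?thesis by (simp add: bilinear_rzero[OF assms])
qed

lemma Tsum:
  assumes "bounded_linear T" shows "T (\<Sum>i\<in>F. g i) = (\<Sum>i\<in>F. T (g i))"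
proof -
  interpret T: bounded_linear T by fact
  show ?thesis by (rule T.sum)
qed

lemma quad_form:
  assumes bl: "bilinear b" and T: "bounded_linear T" and p: "(B, \<epsilon>) \<in> Omega L A" and A: "finite A"
  shows "b (T (\<Sum>k\<in>B. \<epsilon> k *\<^sub>R e k)) (\<Sum>k\<in>B. \<epsilon> k *\<^sub>R f k)
     = (\<Sum>j\<in>A. \<Sum>k\<in>A. \<epsilon> j * \<epsilon> k * b (T (e j)) (f k))"
proof -
  interpret T: bounded_linear T by fact
  note m = Omega_mem[OF p]
  have s1: "(\<Sum>k\<in>B. \<epsilon> k *\<^sub>R e k) = (\<Sum>k\<in>A. \<epsilon> k *\<^sub>R e k)"
    using m(1,4) A by (intro sum.mono_neutral_left) auto
  have s2: "(\<Sum>k\<in>B. \<epsilon> k *\<^sub>R f k) = (\<Sum>k\<in>A. \<epsilon> k *\<^sub>R f k)"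
    using m(1,4) A by (intro sum.mono_neutral_left) auto
  have "b (T (\<Sum>k\<in>A. \<epsilon> k *\<^sub>R e k)) (\<Sum>k\<in>A. \<epsilon> k *\<^sub>R f k)
      = (\<Sum>j\<in>A. b (T (\<epsilon> j *\<^sub>R e j)) (\<Sum>k\<in>A. \<epsilon> k *\<^sub>R f k))"
    by (simp add: Tsum[OF T] bsum1[OF bl])
  also have "\<dots> = (\<Sum>j\<in>A. \<Sum>k\<in>A. \<epsilon> j * \<epsilon> k * b (T (e j)) (f k))"
    by (simp add: bsum2[OF bl] T.scaleR bilinear_lmul[OF bl] bilinear_rmul[OF bl] mult_ac)
  finally show ?thesis using s1 s2 by simp
qed

theorem proposition3p3:
  fixes b :: "'x::banach \<Rightarrow> 'y::banach \<Rightarrow> real"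
    and e :: "nat \<Rightarrow> 'x" and f :: "nat \<Rightarrow> 'y"
    and Cd Cu Cs \<kappa> :: real and T :: "'x \<Rightarrow> 'x" and L N :: nat and A :: "nat set"
  assumes B: "dual_pair_basis b Cd e f"
    and sub: "subsymmetric b Cu Cs e"
    and T: "bounded_linear T"
    and delta_pos: "(INF j. b (T (e j)) (f j)) > 0"
    and L: "even L" "L > 0"
    and kappa: "0 < \<kappa>" "\<kappa> < 1"
    and N: "N = max L (1 + nat \<lceil>2 * Cd^2 * Cu * Cs^3 * (onorm T)^2
                    / (\<kappa>^2 * (INF j. b (T (e j)) (f j))^2)\<rceil>)"
    and A: "finite A" "card A = N"
  shows "(\<Sum>(B, \<epsilon>)\<in>Omega L A. b (T (\<Sum>k\<in>B. \<epsilon> k *\<^sub>R e k)) (\<Sum>k\<in>B. \<epsilon> k *\<^sub>R f k))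
           / real (card (Omega L A))
         \<ge> (1 - \<kappa>) * (INF j. b (T (e j)) (f j)) * real L
    \<and> (\<exists>B \<epsilon>. B \<subseteq> A \<and> card B = L \<and> \<epsilon> \<in> signs_E B \<and>
         b (T (\<Sum>k\<in>B. \<epsilon> k *\<^sub>R e k)) (\<Sum>k\<in>B. \<epsilon> k *\<^sub>R f k)
           \<ge> (1 - \<kappa>) * (INF j. b (T (e j)) (f j)) * real L)"
proof -
  have bl: "bilinear b" by (rule dpb_bl[OF B])
  have un: "unconditional b Cu e" and sp: "spreading b Cs e" using sub by (simp_all add: subsymmetric_def)
  have Cd1: "Cd \<ge> 1" by (rule Cd_ge1[OF B])
  have Cs1: "Cs \<ge> 1" by (rule Cs_ge1[OF B sp])
  have Cu0: "Cu \<ge> 0" by (rule Cu_ge0[OF B un])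
  define \<delta> where "\<delta> = (INF j. b (T (e j)) (f j))"
  define t where "t j k = b (T (e j)) (f k)" for j k
  define nT where "nT = onorm T"
  have nT0: "nT \<ge> 0" unfolding nT_def by (rule onorm_pos_le[OF T])
  have tb: "\<bar>t j k\<bar> \<le> Cd * nT" for j k
  proof -
    have "\<bar>t j k\<bar> \<le> Cd * norm (T (e j)) * norm (f k)" unfolding t_def using dpb_bd[OF B] by blast
    also have "\<dots> = Cd * norm (T (e j))" using dpb_nf[OF B] by simp
    also have "\<dots> \<le> Cd * (nT * norm (e j))" unfolding nT_def
      using onorm[OF T] dpb_Cd[OF B] by (intro mult_left_mono) auto
    also have "\<dots> = Cd * nT" using dpb_ne[OF B] by simp
    finally show ?thesis .
  qed
  have lb: "- (Cd * nT) \<le> b (T (e j)) (f j)" for j using tb[of j j] unfolding t_def by linarith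
  have bdd: "bdd_below (range (\<lambda>j. b (T (e j)) (f j)))"
    by (rule bdd_belowI[of _ "- (Cd * nT)"]) (use lb in auto)
  have tjj: "\<delta> \<le> t j j" for j unfolding \<delta>_def t_def by (rule cINF_lower[OF bdd UNIV_I])
  have dpos: "\<delta> > 0" using delta_pos by (simp add: \<delta>_def)
  have dle: "\<delta> \<le> Cd * nT" using tjj[of 0] tb[of 0 0] by simp
  have L2: "L \<ge> 2" using L by (auto elim: evenE)
  have NL: "N \<ge> L" using N by simp
  have N2: "N \<ge> 2" using NL L2 by simp
  define X where "X = 2 * Cd^2 * Cu * Cs^3 * nT^2 / (\<kappa>^2 * \<delta>^2)"
  have NX: "real N - 1 \<ge> X"
  proof -
    have "N \<ge> 1 + nat \<lceil>X\<rceil>" using N unfolding X_def nT_def \<delta>_def by simp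
    then have "real N \<ge> 1 + real (nat \<lceil>X\<rceil>)" by linarith
    moreover have "X \<le> real (nat \<lceil>X\<rceil>)" by (rule real_nat_ceiling_ge)
    ultimately show ?thesis by linarith
  qed
  define K where "K = 2 * Cs^2 * Cu * nT"
  have K0: "K \<ge> 0" unfolding K_def using Cu0 nT0 by simp
  have KX: "K \<le> \<kappa> * \<delta> * (real N - 1)"
  proof -
    have kd: "\<kappa> * \<delta> > 0" using kappa dpos by simp
    have "\<kappa> * \<delta> \<le> \<delta>" using kappa dpos by simp
    also have "\<dots> \<le> Cd * nT" by (rule dle)
    also have "\<dots> \<le> Cd^2 * Cs * nT"
    proof -
      have "Cd \<le> Cd^2 * Cs" using Cd1 Cs1
        by (metis mult_le_cancel_left1 mult_left_mono nle_le one_le_power order_trans power2_eq_square zero_le_one)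
      then show ?thesis using nT0 by (intro mult_right_mono) auto
    qed
    finally have a: "\<kappa> * \<delta> \<le> Cd^2 * Cs * nT" .
    have "K * (\<kappa> * \<delta>) \<le> K * (Cd^2 * Cs * nT)" using a K0 by (rule mult_left_mono)
    also have "K * (Cd^2 * Cs * nT) = (\<kappa> * \<delta>) * X * (\<kappa> * \<delta>)"
    proof -
      have "\<kappa> \<noteq> 0" "\<delta> \<noteq> 0" using kappa dpos by auto
      then show ?thesis unfolding K_def X_def by (simp add: field_simps power2_eq_square power3_eq_cube)
    qed
    finally have h: "K * (\<kappa> * \<delta>) \<le> \<kappa> * \<delta> * X * (\<kappa> * \<delta>)" .
    have "K \<le> (\<kappa> * \<delta>) * X" using h kd by (rule mult_right_le_imp_le)
    also have "\<dots> \<le> (\<kappa> * \<delta>) * (real N - 1)" using NX kd by (intro mult_left_mono) auto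
    finally show ?thesis .
  qed
  define D where "D = (\<Sum>j\<in>A. t j j)"
  define S where "S = (\<Sum>j\<in>A. \<Sum>k\<in>A. t j k)"
  have DN: "D \<ge> real N * \<delta>"
  proof -
    have "(\<Sum>j\<in>A. \<delta>) \<le> D" unfolding D_def by (rule sum_mono) (rule tjj)
    then show ?thesis using A by simp
  qed
  define one where "one = (\<Sum>j\<in>A. e j)"
  have Sform: "S = (\<Sum>k\<in>A. b (T one) (f k))"
    unfolding S_def one_def t_def Tsum[OF T] bsum1[OF bl] by (rule sum.swap)
  have SK: "S \<le> real N * K"
  proof -
    have N0: "A \<noteq> {}" using A N2 by auto
    then obtain a0 where a0: "a0 \<in> A" by blast
    have "b one (f a0) = (\<Sum>j\<in>A. b (e j) (f a0))" unfolding one_def bsum1[OF bl] ..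
    also have "\<dots> = (\<Sum>j\<in>A. if j = a0 then 1 else 0)" using dpb_bio[OF B] by simp
    also have "\<dots> = 1" using a0 A by simp
    finally have "one \<noteq> 0" using bilinear_lzero[OF bl] by auto
    then have n1: "norm one > 0" by simp
    have "\<bar>S\<bar> * norm one \<le> 2 * real N * Cs^2 * Cu * norm (T one)"
      unfolding Sform one_def by (rule bidem[OF B sp un A])
    also have "\<dots> \<le> 2 * real N * Cs^2 * Cu * (nT * norm one)"
      unfolding nT_def using onorm[OF T] Cu0 by (intro mult_left_mono) auto
    also have "\<dots> = (real N * K) * norm one" unfolding K_def by simp
    finally have "\<bar>S\<bar> \<le> real N * K" using n1 by simp
    then show ?thesis by simp
  qed
  let ?O = "Omega L A"
  have fO: "finite ?O" by (rule Omega_finite[OF A(1)])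
  have neO: "?O \<noteq> {}" using Omega_nonempty[OF A(1)] NL L A by simp
  have M0: "real (card ?O) > 0" using fO neO by (simp add: card_gt_0_iff)
  define Q where "Q p = b (T (\<Sum>k\<in>fst p. snd p k *\<^sub>R e k)) (\<Sum>k\<in>fst p. snd p k *\<^sub>R f k)" for p
  have sumQ: "(\<Sum>(B, \<epsilon>)\<in>?O. b (T (\<Sum>k\<in>B. \<epsilon> k *\<^sub>R e k)) (\<Sum>k\<in>B. \<epsilon> k *\<^sub>R f k)) = (\<Sum>p\<in>?O. Q p)"
    unfolding Q_def by (intro sum.cong refl) auto
  have "(\<Sum>p\<in>?O. Q p) = (\<Sum>p\<in>?O. \<Sum>j\<in>A. \<Sum>k\<in>A. snd p j * snd p k * t j k)"
  proof (intro sum.cong refl)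
    fix p assume p: "p \<in> ?O"
    obtain B \<epsilon> where pe: "p = (B, \<epsilon>)" by fastforce
    show "Q p = (\<Sum>j\<in>A. \<Sum>k\<in>A. snd p j * snd p k * t j k)"
      unfolding Q_def pe t_def using quad_form[OF bl T p[unfolded pe] A(1)] by simp
  qed
  also have "\<dots> = real (card ?O) * real L * (real N * D - S) / (real N * (real N - 1))"
    unfolding D_def S_def by (rule avg_formula[OF A N2])
  finally have sumQ2: "(\<Sum>p\<in>?O. Q p) = real (card ?O) * real L * (real N * D - S) / (real N * (real N - 1))" .
  have Npos: "real N - 1 > 0" "real N > 0" using N2 by auto
  have avg: "(\<Sum>p\<in>?O. Q p) / real (card ?O) = real L * (real N * D - S) / (real N * (real N - 1))"
    unfolding sumQ2 using M0 by simp
  have key: "(1 - \<kappa>) * \<delta> * real L \<le> real L * (real N * D - S) / (real N * (real N - 1))"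
  proof -
    have "real N * D - S \<ge> real N * (real N * \<delta>) - real N * K"
      using DN SK Npos by (smt (verit) mult_left_mono)
    moreover have "real N * K \<le> real N * (\<kappa> * \<delta> * (real N - 1))"
      using KX Npos by simp
    ultimately have "real N * D - S \<ge> real N * (real N * \<delta>) - real N * (\<kappa> * \<delta> * (real N - 1))" by simp
    moreover have "real N * (real N * \<delta>) - real N * (\<kappa> * \<delta> * (real N - 1))
        = (1 - \<kappa>) * \<delta> * (real N * (real N - 1)) + real N * \<delta>"
      by (simp add: algebra_simps)
    moreover have "real N * \<delta> \<ge> 0" using dpos Npos by simp
    ultimately have h: "(1 - \<kappa>) * \<delta> * (real N * (real N - 1)) \<le> real N * D - S" by simp
    have "(1 - \<kappa>) * \<delta> * real L * (real N * (real N - 1)) \<le> real L * (real N * D - S)"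
      using mult_left_mono[OF h, of "real L"] by (simp add: algebra_simps)
    then show ?thesis using Npos by (simp add: pos_le_divide_eq)
  qed
  have part1: "(\<Sum>p\<in>?O. Q p) / real (card ?O) \<ge> (1 - \<kappa>) * \<delta> * real L"
    using avg key by simp
  have part2: "\<exists>p\<in>?O. Q p \<ge> (1 - \<kappa>) * \<delta> * real L"
  proof (rule ccontr)
    assume "\<not> ?thesis"
    then have "\<forall>p\<in>?O. Q p < (1 - \<kappa>) * \<delta> * real L" by auto
    then have "(\<Sum>p\<in>?O. Q p) < (\<Sum>p\<in>?O. (1 - \<kappa>) * \<delta> * real L)"
      using fO neO by (intro sum_strict_mono) auto
    then have "(\<Sum>p\<in>?O. Q p) < real (card ?O) * ((1 - \<kappa>) * \<delta> * real L)" by simp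
    then have "(\<Sum>p\<in>?O. Q p) / real (card ?O) < (1 - \<kappa>) * \<delta> * real L"
      using M0 by (simp add: divide_less_eq mult.commute)
    then show False using part1 by simp
  qed
  then obtain B \<epsilon> where Be: "(B, \<epsilon>) \<in> ?O" "Q (B, \<epsilon>) \<ge> (1 - \<kappa>) * \<delta> * real L" by fastforce
  have ex: "\<exists>B \<epsilon>. B \<subseteq> A \<and> card B = L \<and> \<epsilon> \<in> signs_E B \<and>
         b (T (\<Sum>k\<in>B. \<epsilon> k *\<^sub>R e k)) (\<Sum>k\<in>B. \<epsilon> k *\<^sub>R f k) \<ge> (1 - \<kappa>) * \<delta> * real L"
    using Be unfolding Q_def Omega_def by auto
  show ?thesis using part1 ex unfolding sumQ[symmetric] \<delta>_def by blast
qed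


end
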